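(* Let $M\in\mathbb{W}^{n\times n}$ and let $\mathcal{I}_m\subseteq\mathcal{I}_{m-1}\subseteq\dots\subseteq\mathcal{I}_1\subseteq\{1,\dots,n\}$ with $\mathcal{I}_m$ nonempty. If the principal submatrix of $M$ indexed by $\{1,\dots,n\}\setminus\mathcal{I}_m$ is upper triangular with nonzero diagonal, then the successive reduction $r(M;\mathcal{I}_1,\dots,\mathcal{I}_{m-1},\mathcal{I}_m)$ is defined and $r(M;\mathcal{I}_1,\dots,\mathcal{I}_{m-1},\mathcal{I}_m)=r(M;\mathcal{I}_m)$.
   Context: $\mathbb{W}$ is the field of rational functions in a complex variable $\lambda$ with complex coefficients. For $M\in\mathbb{W}^{n\times n}$ and an index set $\mathcal{I}=\{i_1<\dots<i_k\}\subseteq\{1,\dots,n\}$, the principal submatrix indexed by $\mathcal{I}$ is the $k\times k$ matrix with $(s,t)$ entry $M_{i_si_t}$ (indices kept in increasing order; "upper triangular" refers to this order). For nonempty $\mathcal{I}$ with complement $\bar{\mathcal{I}}=\{1,\dots,n\}\setminus\mathcal{I}$: if $\mathcal{I}=\{1,\dots,n\}$ set $r(M;\mathcal{I})=M$; otherwise let $A$ be the principal submatrix indexed by $\bar{\mathcal{I}}$, $D$ that indexed by $\mathcal{I}$, $B$ the submatrix with rows $\bar{\mathcal{I}}$ and columns $\mathcal{I}$, $C$ the submatrix with rows $\mathcal{I}$ and columns $\bar{\mathcal{I}}$; if $A$ is invertible, the reduction of $M$ over $\mathcal{I}$ is $r(M;\mathcal{I})=D-CA^{-1}B$, a matrix whose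 rows and columns are indexed by the elements of $\mathcal{I}$ in increasing order. For $\mathcal{J}\subseteq\mathcal{I}$ define $r(M;\mathcal{I},\mathcal{J})=r(r(M;\mathcal{I});\mathcal{J})$ (with $\mathcal{J}$ read as a set of indices of $r(M;\mathcal{I})$), and similarly for longer nested sequences, provided each step is defined. *)

theory Defs
  imports "HOL-Computational_Algebra.Polynomial" "HOL-Computational_Algebra.Fraction_Field"
begin

type_synonym W = "complex poly fract"

text \<open>Matrices are represented with labelled rows/columns: a matrix with index set S
  (a finite set of naturals, ordered increasingly) is a function nat => nat => 'a,
  of which only the entries with both indices in S are meaningful.\<close>

definition lmat_invertible :: "nat set \<Rightarrow> (nat \<Rightarrow> nat \<Rightarrow> 'a::field) \<Rightarrow> bool" where
  "lmat_invertible S A \<longleftrightarrow> (\<exists>B. (\<forall>i\<in>S. \<forall>j\<in>S.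
       (\<Sum>k\<in>S. A i k * B k j) = (if i = j then 1 else 0) \<and>
       (\<Sum>k\<in>S. B i k * A k j) = (if i = j then 1 else 0)))"

definition lmat_inv :: "nat set \<Rightarrow> (nat \<Rightarrow> nat \<Rightarrow> 'a::field) \<Rightarrow> (nat \<Rightarrow> nat \<Rightarrow> 'a)" where
  "lmat_inv S A = (SOME B. \<forall>i\<in>S. \<forall>j\<in>S.
       (\<Sum>k\<in>S. A i k * B k j) = (if i = j then 1 else 0) \<and>
       (\<Sum>k\<in>S. B i k * A k j) = (if i = j then 1 else 0))"

definition red_defined :: "nat set \<Rightarrow> (nat \<Rightarrow> nat \<Rightarrow> 'a::field) \<Rightarrow> nat set \<Rightarrow> bool" where
  "red_defined U M I \<longleftrightarrow> I \<noteq> {} \<and> I \<subseteq> U \<and> (I = U \<or> lmat_invertible (U - I) M)"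

text \<open>r(M;I) = D - C A^{-1} B (or M if I = U), as a matrix with index set I
  (entries outside I x I set to 0).\<close>
definition red :: "nat set \<Rightarrow> (nat \<Rightarrow> nat \<Rightarrow> 'a::field) \<Rightarrow> nat set \<Rightarrow> (nat \<Rightarrow> nat \<Rightarrow> 'a)" where
  "red U M I = (\<lambda>i j. if i \<in> I \<and> j \<in> I then
       (if I = U then M i j
        else M i j - (\<Sum>k\<in>U - I. \<Sum>l\<in>U - I. M i k * lmat_inv (U - I) M k l * M l j))
     else 0)"

fun sred :: "nat set \<Rightarrow> (nat \<Rightarrow> nat \<Rightarrow> 'a::field) \<Rightarrow> nat set list \<Rightarrow> (nat \<Rightarrow> nat \<Rightarrow> 'a) option" where
  "sred U M [] = Some M"
| "sred U M (I # Is) = (if red_defined U M I then sred I (red U M I) Is else None)"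

end

theory Submission
  imports Defs
begin

definition inv2 :: "nat set \<Rightarrow> (nat \<Rightarrow> nat \<Rightarrow> 'a::field) \<Rightarrow> (nat \<Rightarrow> nat \<Rightarrow> 'a) \<Rightarrow> bool" where
  "inv2 S A B \<longleftrightarrow> (\<forall>i\<in>S. \<forall>j\<in>S.
       (\<Sum>k\<in>S. A i k * B k j) = (if i = j then 1 else 0) \<and>
       (\<Sum>k\<in>S. B i k * A k j) = (if i = j then 1 else 0))"

lemma invertible_iff: "lmat_invertible S A \<longleftrightarrow> (\<exists>B. inv2 S A B)"
  by (simp add: lmat_invertible_def inv2_def)

lemma inv_inv2: "lmat_invertible S A \<Longrightarrow> inv2 S A (lmat_inv S A)"
  unfolding invertible_iff lmat_inv_def inv2_def[symmetric] by (metis someI_ex)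

lemma delta_sum: "finite S \<Longrightarrow> j \<in> S \<Longrightarrow> (\<Sum>k\<in>S. f k * (if k = j then 1 else 0)) = (f j :: 'a::field)"
  by (simp add: if_distrib cong: if_cong)

lemma delta_sum2: "finite S \<Longrightarrow> j \<in> S \<Longrightarrow> (\<Sum>k\<in>S. (if j = k then 1 else 0) * f k) = (f j :: 'a::field)"
proof -
  assume "finite S" "j \<in> S"
  have "(\<Sum>k\<in>S. (if j = k then 1 else 0) * f k) = (\<Sum>k\<in>S. if j = k then f k else 0)"
    by (rule sum.cong) auto
  then show ?thesis using \<open>finite S\<close> \<open>j \<in> S\<close> by simp
qed

lemma swap3: "(\<Sum>k\<in>S. a k * (\<Sum>l\<in>T. b k l * c l)) = (\<Sum>l\<in>T. (\<Sum>k\<in>S. a k * b k l) * (c l :: 'a::comm_ring))"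
proof -
  have "(\<Sum>k\<in>S. a k * (\<Sum>l\<in>T. b k l * c l)) = (\<Sum>k\<in>S. \<Sum>l\<in>T. a k * b k l * c l)"
    by (simp add: sum_distrib_left mult.assoc)
  also have "\<dots> = (\<Sum>l\<in>T. \<Sum>k\<in>S. a k * b k l * c l)" by (rule sum.swap)
  also have "\<dots> = (\<Sum>l\<in>T. (\<Sum>k\<in>S. a k * b k l) * c l)"
    by (simp add: sum_distrib_right)
  finally show ?thesis .
qed

lemma inv_unique:
  assumes fin: "finite S" and inv: "lmat_invertible S A" and B: "inv2 S A B"
    and i: "i \<in> S" and j: "j \<in> S"
  shows "lmat_inv S A i j = B i j"
proof -
  let ?L = "lmat_inv S A"
  have L: "inv2 S A ?L" using inv by (rule inv_inv2)
  have "?L i j = (\<Sum>k\<in>S. ?L i k * (if k = j then 1 else 0))"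
    using fin j by (simp add: delta_sum)
  also have "\<dots> = (\<Sum>k\<in>S. ?L i k * (\<Sum>l\<in>S. A k l * B l j))"
    using B j by (intro sum.cong) (auto simp: inv2_def)
  also have "\<dots> = (\<Sum>l\<in>S. (\<Sum>k\<in>S. ?L i k * A k l) * B l j)"
    by (rule swap3)
  also have "\<dots> = (\<Sum>l\<in>S. (if i = l then 1 else 0) * B l j)"
    using L i by (intro sum.cong) (auto simp: inv2_def)
  also have "\<dots> = B i j" using fin i by (simp add: delta_sum2)
  finally show ?thesis .
qed

lemma red_alt: "red U M I = (\<lambda>i j. if i \<in> I \<and> j \<in> I then
       M i j - (\<Sum>k\<in>U - I. \<Sum>l\<in>U - I. M i k * lmat_inv (U - I) M k l * M l j) else 0)"
  by (auto simp: red_def fun_eq_iff)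


lemma char:
  fixes M :: "nat \<Rightarrow> nat \<Rightarrow> 'a::field"
  assumes fin: "finite U" and IU: "I \<subseteq> U" and inv: "lmat_invertible (U - I) M"
    and z: "\<forall>k\<in>U - I. (\<Sum>j\<in>U. M k j * z j) = 0" and i: "i \<in> I"
  shows "(\<Sum>j\<in>U. M i j * z j) = (\<Sum>j\<in>I. red U M I i j * z j)"
proof -
  let ?S = "U - I"
  let ?A = "lmat_inv ?S M"
  have A: "inv2 ?S M ?A" using inv by (rule inv_inv2)
  have finS: "finite ?S" and finI: "finite I" using fin IU by (auto intro: finite_subset)
  have split: "(\<Sum>j\<in>U. f j) = (\<Sum>j\<in>I. f j) + (\<Sum>j\<in>?S. f j)" for f :: "nat \<Rightarrow> 'a"
    using sum.subset_diff[OF IU fin, of f] by (simp add: add.commute)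
  have zS: "z k = - (\<Sum>l\<in>?S. ?A k l * (\<Sum>j\<in>I. M l j * z j))" if k: "k \<in> ?S" for k
  proof -
    have e: "(\<Sum>m\<in>?S. M l m * z m) = - (\<Sum>j\<in>I. M l j * z j)" if "l \<in> ?S" for l
      using z that split[of "\<lambda>j. M l j * z j"] by (simp add: eq_neg_iff_add_eq_0 add.commute)
    have "z k = (\<Sum>m\<in>?S. (if k = m then 1 else 0) * z m)"
      using finS k by (simp add: delta_sum2)
    also have "\<dots> = (\<Sum>m\<in>?S. (\<Sum>l\<in>?S. ?A k l * M l m) * z m)"
      using A k by (intro sum.cong) (auto simp: inv2_def)
    also have "\<dots> = (\<Sum>l\<in>?S. ?A k l * (\<Sum>m\<in>?S. M l m * z m))"
      by (rule swap3[symmetric])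
    also have "\<dots> = (\<Sum>l\<in>?S. ?A k l * (- (\<Sum>j\<in>I. M l j * z j)))"
      using e by (intro sum.cong) auto
    finally show ?thesis by (simp add: sum_negf)
  qed
  have "(\<Sum>j\<in>U. M i j * z j) = (\<Sum>j\<in>I. M i j * z j) + (\<Sum>k\<in>?S. M i k * z k)"
    by (rule split)
  also have "(\<Sum>k\<in>?S. M i k * z k) = (\<Sum>k\<in>?S. M i k * (- (\<Sum>l\<in>?S. ?A k l * (\<Sum>j\<in>I. M l j * z j))))"
    using zS by (intro sum.cong) auto
  also have "\<dots> = - (\<Sum>k\<in>?S. M i k * (\<Sum>l\<in>?S. ?A k l * (\<Sum>j\<in>I. M l j * z j)))"
    by (simp add: sum_negf)
  also have "(\<Sum>k\<in>?S. M i k * (\<Sum>l\<in>?S. ?A k l * (\<Sum>j\<in>I. M l j * z j)))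
     = (\<Sum>k\<in>?S. M i k * (\<Sum>j\<in>I. (\<Sum>l\<in>?S. ?A k l * M l j) * z j))"
    by (intro sum.cong refl arg_cong[where f="\<lambda>x. M i _ * x"] swap3)
  also have "\<dots> = (\<Sum>j\<in>I. (\<Sum>k\<in>?S. M i k * (\<Sum>l\<in>?S. ?A k l * M l j)) * z j)"
    by (rule swap3)
  also have "\<dots> = (\<Sum>j\<in>I. (\<Sum>k\<in>?S. \<Sum>l\<in>?S. M i k * ?A k l * M l j) * z j)"
    by (simp add: sum_distrib_left mult.assoc)
  also have "(\<Sum>j\<in>I. M i j * z j) + - (\<Sum>j\<in>I. (\<Sum>k\<in>?S. \<Sum>l\<in>?S. M i k * ?A k l * M l j) * z j)
      = (\<Sum>j\<in>I. red U M I i j * z j)"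
    using i by (simp add: red_alt algebra_simps sum_subtractf[symmetric])
  finally show ?thesis .
qed

lemma exist:
  fixes M :: "nat \<Rightarrow> nat \<Rightarrow> 'a::field"
  assumes fin: "finite U" and IU: "I \<subseteq> U" and inv: "lmat_invertible (U - I) M"
  shows "\<exists>z. (\<forall>j\<in>I. z j = x j) \<and> (\<forall>k\<in>U - I. (\<Sum>j\<in>U. M k j * z j) = 0)"
proof -
  let ?S = "U - I"
  let ?A = "lmat_inv ?S M"
  have A: "inv2 ?S M ?A" using inv by (rule inv_inv2)
  have finS: "finite ?S" and finI: "finite I" using fin IU by (auto intro: finite_subset)
  have split: "(\<Sum>j\<in>U. f j) = (\<Sum>j\<in>I. f j) + (\<Sum>j\<in>?S. f j)" for f :: "nat \<Rightarrow> 'a"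
    using sum.subset_diff[OF IU fin, of f] by (simp add: add.commute)
  define b where "b l = (\<Sum>j\<in>I. M l j * x j)" for l
  define z where "z k = (if k \<in> I then x k else - (\<Sum>l\<in>?S. ?A k l * b l))" for k
  have "(\<Sum>j\<in>U. M k j * z j) = 0" if k: "k \<in> ?S" for k
  proof -
    have "(\<Sum>j\<in>U. M k j * z j) = b k + (\<Sum>m\<in>?S. M k m * z m)"
      unfolding split b_def z_def by simp
    also have "(\<Sum>m\<in>?S. M k m * z m) = - (\<Sum>m\<in>?S. M k m * (\<Sum>l\<in>?S. ?A m l * b l))"
      by (simp add: z_def sum_negf[symmetric] sum_distrib_left)
    also have "(\<Sum>m\<in>?S. M k m * (\<Sum>l\<in>?S. ?A m l * b l)) = (\<Sum>l\<in>?S. (\<Sum>m\<in>?S. M k m * ?A m l) * b l)"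
      by (rule swap3)
    also have "\<dots> = (\<Sum>l\<in>?S. (if k = l then 1 else 0) * b l)"
      using A k by (intro sum.cong) (auto simp: inv2_def)
    also have "\<dots> = b k" using finS k by (simp add: delta_sum2)
    finally show ?thesis by simp
  qed
  then show ?thesis unfolding z_def by (intro exI[of _ z]) (auto simp: z_def)
qed


lemma two_step:
  fixes M :: "nat \<Rightarrow> nat \<Rightarrow> 'a::field"
  assumes fin: "finite U" and LI: "L \<subseteq> I" and IU: "I \<subseteq> U"
    and inv1: "lmat_invertible (U - I) M" and inv2: "lmat_invertible (I - L) (red U M I)"
    and inv3: "lmat_invertible (U - L) M"
  shows "red I (red U M I) L = red U M L"
proof (intro ext)
  fix i j
  let ?R = "red U M I"
  have finI: "finite I" using fin IU by (auto intro: finite_subset)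
  have finL: "finite L" using finI LI by (auto intro: finite_subset)
  show "red I ?R L i j = red U M L i j"
  proof (cases "i \<in> L \<and> j \<in> L")
    case False then show ?thesis by (auto simp: red_def)
  next
    case True
    let ?x = "\<lambda>k. if k = j then 1 else (0::'a)"
    obtain w where w1: "\<forall>k\<in>L. w k = ?x k" and w2: "\<forall>k\<in>I - L. (\<Sum>m\<in>I. ?R k m * w m) = 0"
      using exist[OF finI LI inv2, of ?x] by blast
    obtain z where z1: "\<forall>k\<in>I. z k = w k" and z2: "\<forall>k\<in>U - I. (\<Sum>m\<in>U. M k m * z m) = 0"
      using exist[OF fin IU inv1, of w] by blast
    have c1: "(\<Sum>m\<in>U. M k m * z m) = (\<Sum>m\<in>I. ?R k m * w m)" if "k \<in> I" for k
      using char[OF fin IU inv1 z2 that] z1 by simp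
    have z3: "\<forall>k\<in>U - L. (\<Sum>m\<in>U. M k m * z m) = 0"
    proof
      fix k assume k: "k \<in> U - L"
      show "(\<Sum>m\<in>U. M k m * z m) = 0"
      proof (cases "k \<in> I")
        case True then show ?thesis using c1 w2 k by auto
      next
        case False then show ?thesis using z2 k by auto
      qed
    qed
    have "(\<Sum>m\<in>U. M i m * z m) = (\<Sum>m\<in>L. red U M L i m * z m)"
      using char[OF fin order.trans[OF LI IU] inv3 z3] True by blast
    also have "\<dots> = (\<Sum>m\<in>L. red U M L i m * ?x m)"
      using z1 w1 LI by (intro sum.cong) auto
    also have "\<dots> = red U M L i j" using finL True by (simp add: delta_sum)
    finally have a: "(\<Sum>m\<in>U. M i m * z m) = red U M L i j" .
    have "(\<Sum>m\<in>U. M i m * z m) = (\<Sum>m\<in>I. ?R i m * w m)" using c1 True LI by blast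
    also have "\<dots> = (\<Sum>m\<in>L. red I ?R L i m * w m)"
      using char[OF finI LI inv2 w2] True by blast
    also have "\<dots> = (\<Sum>m\<in>L. red I ?R L i m * ?x m)"
      using w1 by (intro sum.cong) auto
    also have "\<dots> = red I ?R L i j" using finL True by (simp add: delta_sum)
    finally show ?thesis using a by simp
  qed
qed

lemma tri_inv:
  fixes A :: "nat \<Rightarrow> nat \<Rightarrow> 'a::field"
  assumes "finite S"
  shows "(\<forall>i\<in>S. \<forall>j\<in>S. j < i \<longrightarrow> A i j = 0) \<longrightarrow> (\<forall>i\<in>S. A i i \<noteq> 0) \<longrightarrow>
    (\<exists>B. inv2 S A B \<and> (\<forall>i\<in>S. \<forall>j\<in>S. j < i \<longrightarrow> B i j = 0))"
  using assms
proof (induction rule: finite_linorder_max_induct)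
  case empty then show ?case by (auto simp: inv2_def)
next
  case (insert m S)
  show ?case
  proof (intro impI)
    assume tri: "\<forall>i\<in>insert m S. \<forall>j\<in>insert m S. j < i \<longrightarrow> A i j = 0"
      and dg: "\<forall>i\<in>insert m S. A i i \<noteq> 0"
    from insert.IH tri dg obtain B' where B': "inv2 S A B'"
      and B't: "\<forall>i\<in>S. \<forall>j\<in>S. j < i \<longrightarrow> B' i j = 0" by auto
    have mS: "m \<notin> S" using insert.hyps by auto
    let ?d = "A m m"
    have d: "?d \<noteq> 0" using dg by auto
    have row: "A m k = 0" if "k \<in> S" for k using tri that insert.hyps by auto
    define B where "B i j = (if i = m then (if j = m then 1 / ?d else 0)
        else if j = m then - (\<Sum>k\<in>S. B' i k * A k m) / ?d else B' i j)" for i j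
    have sumS: "(\<Sum>k\<in>insert m S. f k) = f m + (\<Sum>k\<in>S. f k)" for f :: "nat \<Rightarrow> 'a"
      using insert.hyps mS by simp
    have BS: "(\<Sum>k\<in>S. g k * B k j) = (\<Sum>k\<in>S. g k * B' k j)" if "j \<in> S" for g j
      using that mS by (intro sum.cong) (auto simp: B_def)
    have BS2: "(\<Sum>k\<in>S. B i k * g k) = (\<Sum>k\<in>S. B' i k * g k)" if "i \<in> S" for g i
      using that mS by (intro sum.cong) (auto simp: B_def)
    have inv: "inv2 (insert m S) A B"
      unfolding inv2_def
    proof (intro ballI)
      fix i j assume i: "i \<in> insert m S" and j: "j \<in> insert m S"
      have AB: "(\<Sum>k\<in>insert m S. A i k * B k j) = (if i = j then 1 else 0)"
      proof (cases "j = m")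
        case False
        then have jS: "j \<in> S" using j by auto
        have "(\<Sum>k\<in>insert m S. A i k * B k j) = A i m * B m j + (\<Sum>k\<in>S. A i k * B k j)"
          by (rule sumS)
        also have "\<dots> = (\<Sum>k\<in>S. A i k * B' k j)"
          using False jS BS[OF jS] by (simp add: B_def)
        also have "\<dots> = (if i = j then 1 else 0)"
        proof (cases "i = m")
          case True then show ?thesis using row False by simp
        next
          case False then show ?thesis using B' i jS by (auto simp: inv2_def)
        qed
        finally show ?thesis .
      next
        case True
        show ?thesis
        proof (cases "i = m")
          case True then show ?thesis using `j = m` row d by (simp add: sumS B_def)
        next
          case False
          then have iS: "i \<in> S" using i by auto
          have "(\<Sum>k\<in>S. A i k * B k m) = (\<Sum>k\<in>S. - (A i k * (\<Sum>l\<in>S. B' k l * A l m)) / ?d)"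
            using mS by (intro sum.cong refl) (auto simp: B_def)
          also have "\<dots> = - (\<Sum>k\<in>S. A i k * (\<Sum>l\<in>S. B' k l * A l m)) / ?d"
            by (simp only: sum_divide_distrib[symmetric] sum_negf)
          also have "(\<Sum>k\<in>S. A i k * (\<Sum>l\<in>S. B' k l * A l m)) = (\<Sum>l\<in>S. (\<Sum>k\<in>S. A i k * B' k l) * A l m)"
            by (rule swap3)
          also have "\<dots> = (\<Sum>l\<in>S. (if i = l then 1 else 0) * A l m)"
            using B' iS by (intro sum.cong) (auto simp: inv2_def)
          also have "\<dots> = A i m" using iS insert.hyps by (simp add: delta_sum2)
          finally show ?thesis using True False d by (simp add: sumS B_def)
        qed
      qed
      have BA: "(\<Sum>k\<in>insert m S. B i k * A k j) = (if i = j then 1 else 0)"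
      proof (cases "i = m")
        case True
        have "(\<Sum>k\<in>S. B m k * A k j) = 0" using mS by (intro sum.neutral) (auto simp: B_def)
        then show ?thesis using True j row d by (auto simp: sumS B_def)
      next
        case False
        then have iS: "i \<in> S" using i by auto
        show ?thesis
        proof (cases "j = m")
          case True
          have "(\<Sum>k\<in>insert m S. B i k * A k j) = B i m * A m m + (\<Sum>k\<in>S. B i k * A k m)"
            using True by (simp add: sumS)
          also have "(\<Sum>k\<in>S. B i k * A k m) = (\<Sum>k\<in>S. B' i k * A k m)" by (rule BS2[OF iS])
          finally show ?thesis using True False d by (simp add: B_def)
        next
          case False
          then have jS: "j \<in> S" using j by auto
          have "(\<Sum>k\<in>insert m S. B i k * A k j) = (\<Sum>k\<in>S. B' i k * A k j)"
          proof -
            have "(\<Sum>k\<in>insert m S. B i k * A k j) = B i m * A m j + (\<Sum>k\<in>S. B i k * A k j)"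
              by (rule sumS)
            also have "(\<Sum>k\<in>S. B i k * A k j) = (\<Sum>k\<in>S. B' i k * A k j)" by (rule BS2[OF iS])
            finally show ?thesis using row[OF jS] by simp
          qed
          then show ?thesis using B' iS jS by (auto simp: inv2_def)
        qed
      qed
      show "(\<Sum>k\<in>insert m S. A i k * B k j) = (if i = j then 1 else 0) \<and>
            (\<Sum>k\<in>insert m S. B i k * A k j) = (if i = j then 1 else 0)" using AB BA by simp
    qed
    have "\<forall>i\<in>insert m S. \<forall>j\<in>insert m S. j < i \<longrightarrow> B i j = 0"
      using B't insert.hyps by (auto simp: B_def)
    then show "\<exists>B. inv2 (insert m S) A B \<and> (\<forall>i\<in>insert m S. \<forall>j\<in>insert m S. j < i \<longrightarrow> B i j = 0)"
      using inv by blast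
  qed
qed


lemma tri_facts:
  fixes A :: "nat \<Rightarrow> nat \<Rightarrow> 'a::field"
  assumes fin: "finite S" and tri: "\<forall>i\<in>S. \<forall>j\<in>S. j < i \<longrightarrow> A i j = 0" and dg: "\<forall>i\<in>S. A i i \<noteq> 0"
  shows "lmat_invertible S A \<and> (\<forall>i\<in>S. \<forall>j\<in>S. j < i \<longrightarrow> lmat_inv S A i j = 0)"
proof -
  obtain B where B: "inv2 S A B" and Bt: "\<forall>i\<in>S. \<forall>j\<in>S. j < i \<longrightarrow> B i j = 0"
    using tri_inv[OF fin] tri dg by blast
  have inv: "lmat_invertible S A" using B by (auto simp: invertible_iff)
  show ?thesis using inv inv_unique[OF fin inv B] Bt by auto
qed

lemma red_tri:
  fixes M :: "nat \<Rightarrow> nat \<Rightarrow> 'a::field"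
  assumes fin: "finite U" and LI: "L \<subseteq> I" and IU: "I \<subseteq> U"
    and tri: "\<forall>i\<in>U - L. \<forall>j\<in>U - L. j < i \<longrightarrow> M i j = 0" and dg: "\<forall>i\<in>U - L. M i i \<noteq> 0"
  shows "(\<forall>i\<in>I - L. \<forall>j\<in>I - L. j < i \<longrightarrow> red U M I i j = 0) \<and> (\<forall>i\<in>I - L. red U M I i i \<noteq> 0)"
proof -
  let ?S = "U - I"
  let ?A = "lmat_inv ?S M"
  have sub: "?S \<subseteq> U - L" using LI by auto
  have finS: "finite ?S" using fin by auto
  have t1: "\<forall>i\<in>?S. \<forall>j\<in>?S. j < i \<longrightarrow> M i j = 0" using tri sub by blast
  have t2: "\<forall>i\<in>?S. M i i \<noteq> 0" using dg sub by blast
  have At: "\<forall>i\<in>?S. \<forall>j\<in>?S. j < i \<longrightarrow> ?A i j = 0"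
    using tri_facts[OF finS t1 t2] by blast
  have key: "red U M I i j = M i j" if i: "i \<in> I - L" and j: "j \<in> I - L" and ji: "j \<le> i" for i j
  proof -
    have "M i k * ?A k l * M l j = 0" if k: "k \<in> ?S" and l: "l \<in> ?S" for k l
    proof -
      have iU: "i \<in> U - L" "j \<in> U - L" "k \<in> U - L" "l \<in> U - L" using i j k l IU sub by auto
      show ?thesis
      proof (cases "k < i")
        case True then show ?thesis using tri iU by auto
      next
        case F1: False
        show ?thesis
        proof (cases "l < k")
          case True then show ?thesis using At k l by auto
        next
          case F2: False
          show ?thesis
          proof (cases "j < l")
            case True then show ?thesis using tri iU by auto
          next
            case False
            then have "k = i" using F1 F2 ji by auto
            then show ?thesis using i k by auto
          qed
        qed
      qed
    qed
    then have "(\<Sum>k\<in>?S. \<Sum>l\<in>?S. M i k * ?A k l * M l j) = 0"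
      by (intro sum.neutral ballI) simp
    then show ?thesis using i j by (simp add: red_alt)
  qed
  show ?thesis
  proof
    show "\<forall>i\<in>I - L. \<forall>j\<in>I - L. j < i \<longrightarrow> red U M I i j = 0"
    proof (intro ballI impI)
      fix i j assume i: "i \<in> I - L" and j: "j \<in> I - L" and ji: "j < i"
      have "red U M I i j = M i j" using key[OF i j] ji by simp
      moreover have "i \<in> U - L" "j \<in> U - L" using i j IU by auto
      ultimately show "red U M I i j = 0" using tri ji by simp
    qed
    show "\<forall>i\<in>I - L. red U M I i i \<noteq> 0"
    proof
      fix i assume i: "i \<in> I - L"
      have "red U M I i i = M i i" using key[OF i i] by simp
      moreover have "i \<in> U - L" using i IU by auto
      ultimately show "red U M I i i \<noteq> 0" using dg by simp
    qed
  qed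
qed

definition chain :: "nat set list \<Rightarrow> bool" where
  "chain Is \<longleftrightarrow> (\<forall>k. Suc k < length Is \<longrightarrow> Is ! Suc k \<subseteq> Is ! k)"

lemma chain_tl: "chain (I # Is) \<Longrightarrow> chain Is"
  unfolding chain_def
proof (intro allI impI)
  fix k assume h: "\<forall>k. Suc k < length (I # Is) \<longrightarrow> (I # Is) ! Suc k \<subseteq> (I # Is) ! k"
    and k: "Suc k < length Is"
  from h[rule_format, of "Suc k"] k show "Is ! Suc k \<subseteq> Is ! k" by simp
qed

lemma chain_hd: "chain (I # J # Is) \<Longrightarrow> J \<subseteq> I"
  unfolding chain_def by (drule spec[of _ 0]) simp

lemma chain_last: "chain Is \<Longrightarrow> Is \<noteq> [] \<Longrightarrow> last Is \<subseteq> hd Is"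
proof (induction Is)
  case Nil then show ?case by simp
next
  case (Cons I Is)
  show ?case
  proof (cases Is)
    case Nil then show ?thesis by simp
  next
    case (Cons J Js)
    have "last Is \<subseteq> J" using Cons.IH chain_tl[OF Cons.prems(1)] Cons by simp
    moreover have "J \<subseteq> I" using chain_hd Cons.prems(1) Cons by simp
    ultimately show ?thesis using Cons by simp
  qed
qed

lemma main:
  fixes M :: "nat \<Rightarrow> nat \<Rightarrow> 'a::field"
  shows "Is \<noteq> [] \<Longrightarrow> finite U \<Longrightarrow> hd Is \<subseteq> U \<Longrightarrow> chain Is \<Longrightarrow> last Is \<noteq> {} \<Longrightarrow>
    \<forall>i\<in>U - last Is. \<forall>j\<in>U - last Is. j < i \<longrightarrow> M i j = 0 \<Longrightarrow>
    \<forall>i\<in>U - last Is. M i i \<noteq> 0 \<Longrightarrow>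
    red_defined U M (last Is) \<and> sred U M Is = Some (red U M (last Is))"
proof (induction Is arbitrary: U M)
  case Nil then show ?case by simp
next
  case (Cons I Is)
  let ?L = "last (I # Is)"
  have LI: "?L \<subseteq> I" using chain_last[OF Cons.prems(4)] by simp
  have IU: "I \<subseteq> U" using Cons.prems(3) by simp
  have finL: "finite (U - ?L)" using Cons.prems(2) by simp
  have rdL: "red_defined U M ?L"
    using tri_facts[OF finL Cons.prems(6,7)] Cons.prems(3,5) LI IU by (auto simp: red_defined_def)
  show ?case
  proof (cases Is)
    case Nil then show ?thesis using rdL by simp
  next
    case (Cons J Js)
    have L: "last Is = ?L" using Cons by simp
    have finS: "finite (U - I)" using Cons.prems(2) by simp
    have sub: "U - I \<subseteq> U - ?L" using LI by auto
    have inv1: "lmat_invertible (U - I) M"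
    proof -
      have t1: "\<forall>i\<in>U - I. \<forall>j\<in>U - I. j < i \<longrightarrow> M i j = 0" using Cons.prems(6) sub by blast
      have t2: "\<forall>i\<in>U - I. M i i \<noteq> 0" using Cons.prems(7) sub by blast
      show ?thesis using tri_facts[OF finS t1 t2] by blast
    qed
    have rdI: "red_defined U M I"
      using inv1 IU LI Cons.prems(5) by (auto simp: red_defined_def)
    have finI: "finite I" using Cons.prems(2) IU by (auto intro: finite_subset)
    have rt: "(\<forall>i\<in>I - ?L. \<forall>j\<in>I - ?L. j < i \<longrightarrow> red U M I i j = 0) \<and> (\<forall>i\<in>I - ?L. red U M I i i \<noteq> 0)"
      using red_tri[OF Cons.prems(2) LI IU] Cons.prems(6,7) by blast
    have IH: "red_defined I (red U M I) ?L \<and> sred I (red U M I) Is = Some (red I (red U M I) ?L)"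
      using Cons.IH[of I "red U M I"] finI chain_hd[of I J Js] Cons.prems(4,5) chain_tl[OF Cons.prems(4)] rt L Cons
      by simp
    have inv2: "lmat_invertible (I - ?L) (red U M I)"
    proof (cases "?L = I")
      case True then show ?thesis by (auto simp: invertible_iff inv2_def)
    next
      case False then show ?thesis using IH by (auto simp: red_defined_def)
    qed
    have inv3: "lmat_invertible (U - ?L) M"
      using tri_facts[OF finL Cons.prems(6,7)] by blast
    have "red I (red U M I) ?L = red U M ?L"
      using two_step[OF Cons.prems(2) LI IU inv1 inv2 inv3] .
    then show ?thesis using rdL rdI IH by simp
  qed
qed

theorem lemma2:
  fixes n :: nat and M :: "nat \<Rightarrow> nat \<Rightarrow> W" and Is :: "nat set list"
  assumes "Is \<noteq> []"
    and "hd Is \<subseteq> {1..n}"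
    and "\<forall>k. Suc k < length Is \<longrightarrow> Is ! Suc k \<subseteq> Is ! k"
    and "last Is \<noteq> {}"
    and "\<forall>i\<in>{1..n} - last Is. \<forall>j\<in>{1..n} - last Is. j < i \<longrightarrow> M i j = 0"
    and "\<forall>i\<in>{1..n} - last Is. M i i \<noteq> 0"
  shows "red_defined {1..n} M (last Is) \<and> sred {1..n} M Is = Some (red {1..n} M (last Is))"
  using main[of Is "{1..n}" M] assms by (simp add: chain_def)

end
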